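(* Let $\mu$ be a Borel probability measure satisfying Assumption A (see context) and let $t>1$. Then $\mathrm{Re}\,\omega_t$ is strictly increasing on the real line and $\mathrm{Re}\,\omega_t'(z)\ge\frac12$ for every $z\in\mathbb{C}^+$. Moreover $\omega_t$ is a homeomorphism of $\mathbb{C}^+\cup\mathbb{R}$ onto its image and is biholomorphic on $\mathbb{C}^+\cup\mathbb{R}\setminus\mathrm{supp}(\mu^{\boxplus t})$.
   Context: Assumption A: $n_{\mathrm{ac}},n_{\mathrm{pp}},n^{\mathrm{out}}_{\mathrm{pp}}\ge1$ integers; $\mu$ is a compactly supported Borel probability measure on $\mathbb{R}$ whose singular part is supported on a finite set $\{x_1,\dots,x_{n_{\mathrm{pp}}}\}$, whose absolutely continuous part $\mu_{\mathrm{ac}}$ is supported on $n_{\mathrm{ac}}$ intervals $[E_j^-,E_j^+]$, with exactly $n^{\mathrm{out}}_{\mathrm{pp}}$ atoms outside $\mathrm{supp}(\mu_{\mathrm{ac}})$, no atom at the endpoints $E_j^\pm$, and density $\rho$ with $C_j^{-1}<\rho(x)/\big((x-E_j^-)^{t_j^-}(E_j^+-x)^{t_j^+}\big)<C_j$ a.e. on $[E_j^-,E_j^+]$ for some $-1<t_j^\pm<1$, $C_j\ge1$. $m_\nu(z)=\int\frac{1}{x-z}\nu(dx)$, $F_\nu=-1/m_\nu$. For $t\ge1$, $\omega_t:\mathbb{C}^+\to\mathbb{C}^+$ is the analytic subordination function with $\mathrm{Im}\,\omega_t(z)\ge\mathrm{Im}\,z$, $\omega_t(i\eta)/(i\eta)\to1$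 as $\eta\to\infty$, and $t\omega_t(z)-z=(t-1)F_\mu(\omega_t(z))$; $\mu^{\boxplus t}$ is the probability measure with $F_{\mu^{\boxplus t}}=F_\mu\circ\omega_t$. For $t>1$, $\omega_t$ extends continuously to $\mathbb{C}^+\cup\mathbb{R}$ (with values in $\mathbb{C}^+\cup\mathbb{R}\cup\{\infty\}$), and $\omega_t$ on $\mathbb{R}$ denotes this extension. *)

theory Defs
  imports "HOL-Probability.Probability" "HOL-Complex_Analysis.Complex_Analysis"
begin

definition msupp :: "real measure \<Rightarrow> real set" where
  "msupp \<nu> = {x. \<forall>e>0. emeasure \<nu> {x - e <..< x + e} > 0}"

definition stieltjes :: "real measure \<Rightarrow> complex \<Rightarrow> complex" where
  "stieltjes \<nu> z = integral\<^sup>L \<nu> (\<lambda>x. 1 / (complex_of_real x - z))"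

definition Ftrans :: "real measure \<Rightarrow> complex \<Rightarrow> complex" where
  "Ftrans \<nu> z = - 1 / stieltjes \<nu> z"

definition UHP :: "complex set" where
  "UHP = {z. Im z > 0}"

definition assumption_A :: "real measure \<Rightarrow> nat \<Rightarrow> nat \<Rightarrow> nat \<Rightarrow> bool" where
  "assumption_A \<mu> n_ac n_pp n_out \<longleftrightarrow>
     n_ac \<ge> 1 \<and> n_pp \<ge> 1 \<and> n_out \<ge> 1 \<and>
     prob_space \<mu> \<and> sets \<mu> = sets borel \<and>
     (\<exists>K. compact K \<and> emeasure \<mu> (UNIV - K) = 0) \<and>
     (\<exists>(Em :: nat \<Rightarrow> real) (Ep :: nat \<Rightarrow> real) (tm :: nat \<Rightarrow> real) (tp :: nat \<Rightarrow> real)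
        (C :: nat \<Rightarrow> real) (\<rho> :: real \<Rightarrow> real) (X :: real set) (w :: real \<Rightarrow> real).
        (\<forall>j<n_ac. Em j < Ep j) \<and>
        (\<forall>j. Suc j < n_ac \<longrightarrow> Ep j < Em (Suc j)) \<and>
        finite X \<and> card X = n_pp \<and> (\<forall>x\<in>X. w x > 0) \<and>
        \<rho> \<in> borel_measurable borel \<and> (\<forall>x. \<rho> x \<ge> 0) \<and>
        (\<forall>x. (\<forall>j<n_ac. x \<notin> {Em j .. Ep j}) \<longrightarrow> \<rho> x = 0) \<and>
        (\<forall>A\<in>sets borel. emeasure \<mu> A =
            (\<integral>\<^sup>+ x. ennreal (\<rho> x) * indicator A x \<partial>lborel)
            + (\<Sum>x\<in>X. ennreal (w x) * indicator A x)) \<and>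
        (\<forall>j<n_ac. -1 < tm j \<and> tm j < 1 \<and> -1 < tp j \<and> tp j < 1 \<and> C j \<ge> 1 \<and>
           (AE x in lborel. x \<in> {Em j <..< Ep j} \<longrightarrow>
              1 / C j < \<rho> x / ((x - Em j) powr tm j * (Ep j - x) powr tp j) \<and>
              \<rho> x / ((x - Em j) powr tm j * (Ep j - x) powr tp j) < C j)) \<and>
        card {x\<in>X. x \<notin> msupp (density lborel (\<lambda>x. ennreal (\<rho> x)))} = n_out \<and>
        (\<forall>j<n_ac. Em j \<notin> X \<and> Ep j \<notin> X))"

end

theory Submission
  imports Defs
begin

lemma Im_f: fixes w :: complex and x :: real assumes "Im w > 0"
  shows "Im (1 / (complex_of_real x - w)) = Im w * (cmod (1 / (complex_of_real x - w)))^2"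
proof -
  have nz: "(x - Re w)^2 + (Im w)^2 > 0" using assms by (simp add: add_nonneg_pos)
  have c: "(cmod (complex_of_real x - w))^2 = (x - Re w)^2 + (Im w)^2" by (simp add: cmod_power2)
  show ?thesis using nz by (simp add: Im_divide norm_divide power_divide c)
qed

lemma Im_F: fixes m :: complex shows "Im (-1/m) = Im m * (cmod (-1/m))^2"
  by (simp add: Im_divide norm_divide power_divide cmod_power2)

lemma recip_half: fixes a :: complex assumes "cmod (a - 1) < 1" shows "Re (1/a) > 1/2"
proof -
  have "a \<noteq> 0" using assms by auto
  have "(cmod (a - 1))^2 < 1" using assms by (simp add: power_less_one_iff)
  then have "(Re a - 1)^2 + (Im a)^2 < 1" by (simp add: cmod_power2)
  then have "2 * Re a > (Re a)^2 + (Im a)^2" by (simp add: power2_eq_square algebra_simps)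
  moreover have "(Re a)^2 + (Im a)^2 > 0" using \<open>a \<noteq> 0\<close> by (simp add: complex_eq_iff add_nonneg_pos sum_power2_gt_zero_iff)
  ultimately show ?thesis by (simp add: Re_divide field_simps)
qed

lemma intg_f: fixes M :: "real measure" assumes "prob_space M" "sets M = sets borel" "Im w > 0"
  shows "integrable M (\<lambda>x. 1 / (complex_of_real x - w))"
proof -
  interpret prob_space M by fact
  have m: "(\<lambda>x::real. 1 / (complex_of_real x - w)) \<in> borel_measurable M"
    using assms(2) by (simp add: measurable_cong_sets[OF assms(2) refl]) measurable
  have "norm (1 / (complex_of_real x - w)) \<le> 1 / Im w" for x
  proof -
    have "Im w \<le> cmod (complex_of_real x - w)" using abs_Im_le_cmod[of "complex_of_real x - w"] by simp
    then show ?thesis using assms(3) by (simp add: norm_divide divide_simps)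
  qed
  then show ?thesis by (intro integrable_const_bound[where B="1/Im w"] m) auto
qed

lemma amgm: fixes a b l :: real assumes "l > 0" shows "a * b \<le> (l * a^2 + b^2 / l) / 2"
proof -
  have "0 \<le> (l * a - b)^2" by simp
  then have "2 * l * (a * b) \<le> l * (l * a^2) + b^2" by (simp add: power2_eq_square algebra_simps)
  then show ?thesis using assms by (simp add: field_simps power2_eq_square)
qed

lemma core:
  fixes M :: "real measure" and t :: real and w1 w2 z1 z2 :: complex
  assumes P: "prob_space M" and sM: "sets M = sets borel" and t: "t > 1"
   and z1: "Im z1 > 0" and z2: "Im z2 > 0" and w1: "Im w1 \<ge> Im z1" and w2: "Im w2 \<ge> Im z2"
   and s1: "of_real t * w1 - z1 = of_real (t-1) * Ftrans M w1"
   and s2: "of_real t * w2 - z2 = of_real (t-1) * Ftrans M w2"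
   and ne: "z1 \<noteq> z2"
  shows "Re ((w1 - w2) / (z1 - z2)) > 1/2"
proof -
  interpret prob_space M by fact
  have iw1: "Im w1 > 0" and iw2: "Im w2 > 0" using z1 z2 w1 w2 by auto
  define f1 where "f1 = (\<lambda>x::real. 1 / (complex_of_real x - w1))"
  define f2 where "f2 = (\<lambda>x::real. 1 / (complex_of_real x - w2))"
  define m1 where "m1 = stieltjes M w1"
  define m2 where "m2 = stieltjes M w2"
  have m1i: "m1 = integral\<^sup>L M f1" unfolding m1_def f1_def stieltjes_def ..
  have m2i: "m2 = integral\<^sup>L M f2" unfolding m2_def f2_def stieltjes_def ..
  have F1: "Ftrans M w1 = -1 / m1" unfolding m1_def Ftrans_def ..
  have F2: "Ftrans M w2 = -1 / m2" unfolding m2_def Ftrans_def ..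
  have if1: "integrable M f1" unfolding f1_def by (rule intg_f[OF P sM iw1])
  have if2: "integrable M f2" unfolding f2_def by (rule intg_f[OF P sM iw2])
  have pm1: "(t - 1) * Im (Ftrans M w1) = t * Im w1 - Im z1"
    using arg_cong[OF s1, of Im] by simp
  have pm2: "(t - 1) * Im (Ftrans M w2) = t * Im w2 - Im z2"
    using arg_cong[OF s2, of Im] by simp
  have m1nz: "m1 \<noteq> 0"
  proof
    assume "m1 = 0"
    then have "t * Im w1 = Im z1" using pm1 F1 by simp
    moreover have "t * Im w1 > 1 * Im w1" using t iw1 by (intro mult_strict_right_mono) auto
    ultimately show False using w1 by linarith
  qed
  have m2nz: "m2 \<noteq> 0"
  proof
    assume "m2 = 0"
    then have "t * Im w2 = Im z2" using pm2 F2 by simp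
    moreover have "t * Im w2 > 1 * Im w2" using t iw2 by (intro mult_strict_right_mono) auto
    ultimately show False using w2 by linarith
  qed
  have wne: "w1 \<noteq> w2"
  proof
    assume "w1 = w2"
    then have "Ftrans M w1 = Ftrans M w2" by simp
    moreover have "z1 = of_real t * w1 - of_real (t-1) * Ftrans M w1" using s1 by (simp add: algebra_simps)
    moreover have "z2 = of_real t * w2 - of_real (t-1) * Ftrans M w2" using s2 by (simp add: algebra_simps)
    ultimately show False using ne \<open>w1 = w2\<close> by simp
  qed
  have sq1: "(\<lambda>x. (cmod (f1 x))^2) = (\<lambda>x. Im (f1 x) / Im w1)"
    using Im_f[OF iw1] iw1 unfolding f1_def by (auto simp: field_simps)
  have sq2: "(\<lambda>x. (cmod (f2 x))^2) = (\<lambda>x. Im (f2 x) / Im w2)"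
    using Im_f[OF iw2] iw2 unfolding f2_def by (auto simp: field_simps)
  have Im1: "integral\<^sup>L M (\<lambda>x. Im (f1 x)) = Im m1"
    using integral_bounded_linear[OF bounded_linear_Im if1] m1i by simp
  have Im2: "integral\<^sup>L M (\<lambda>x. Im (f2 x)) = Im m2"
    using integral_bounded_linear[OF bounded_linear_Im if2] m2i by simp
  have E1: "integral\<^sup>L M (\<lambda>x. (cmod (f1 x))^2) = Im m1 / Im w1" unfolding sq1 using Im1 by simp
  have E2: "integral\<^sup>L M (\<lambda>x. (cmod (f2 x))^2) = Im m2 / Im w2" unfolding sq2 using Im2 by simp
  have isq1: "integrable M (\<lambda>x. (cmod (f1 x))^2)" unfolding sq1 using if1 by auto
  have isq2: "integrable M (\<lambda>x. (cmod (f2 x))^2)" unfolding sq2 using if2 by auto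
  have expand: "(cmod (a - b))^2 = (cmod a)^2 - 2 * Re (a * cnj b) + (cmod b)^2" for a b :: complex
    unfolding cmod_power2 by (simp add: power2_eq_square algebra_simps)
  have V1: "integral\<^sup>L M (\<lambda>x. (cmod (f1 x - m1))^2) = Im m1 / Im w1 - (cmod m1)^2"
    and iV1: "integrable M (\<lambda>x. (cmod (f1 x - m1))^2)"
  proof -
    define A where "A = (\<lambda>x. (cmod (f1 x))^2)"
    define R where "R = (\<lambda>x. Re (f1 x * cnj m1))"
    have eq: "(\<lambda>x. (cmod (f1 x - m1))^2) = (\<lambda>x. A x - 2 * R x + (cmod m1)^2)"
      by (auto simp: A_def R_def expand)
    have iA: "integrable M A" using isq1 A_def by simp
    have iR: "integrable M R" unfolding R_def using if1 by auto
    have eA: "integral\<^sup>L M A = Im m1 / Im w1" using E1 A_def by simp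
    have "integral\<^sup>L M R = Re (integral\<^sup>L M (\<lambda>x. f1 x * cnj m1))"
      unfolding R_def by (rule integral_bounded_linear[OF bounded_linear_Re integrable_mult_left[OF if1]])
    also have "integral\<^sup>L M (\<lambda>x. f1 x * cnj m1) = m1 * cnj m1" by (simp add: m1i)
    also have "Re (m1 * cnj m1) = (cmod m1)^2" by (subst complex_norm_square[symmetric]) simp
    finally have eR: "integral\<^sup>L M R = (cmod m1)^2" .
    show "integral\<^sup>L M (\<lambda>x. (cmod (f1 x - m1))^2) = Im m1 / Im w1 - (cmod m1)^2"
      unfolding eq using iA iR eA eR by (simp add: prob_space)
    show "integrable M (\<lambda>x. (cmod (f1 x - m1))^2)" unfolding eq using iA iR by auto
  qed
  have V2: "integral\<^sup>L M (\<lambda>x. (cmod (f2 x - m2))^2) = Im m2 / Im w2 - (cmod m2)^2"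
    and iV2: "integrable M (\<lambda>x. (cmod (f2 x - m2))^2)"
  proof -
    define A where "A = (\<lambda>x. (cmod (f2 x))^2)"
    define R where "R = (\<lambda>x. Re (f2 x * cnj m2))"
    have eq: "(\<lambda>x. (cmod (f2 x - m2))^2) = (\<lambda>x. A x - 2 * R x + (cmod m2)^2)"
      by (auto simp: A_def R_def expand)
    have iA: "integrable M A" using isq2 A_def by simp
    have iR: "integrable M R" unfolding R_def using if2 by auto
    have eA: "integral\<^sup>L M A = Im m2 / Im w2" using E2 A_def by simp
    have "integral\<^sup>L M R = Re (integral\<^sup>L M (\<lambda>x. f2 x * cnj m2))"
      unfolding R_def by (rule integral_bounded_linear[OF bounded_linear_Re integrable_mult_left[OF if2]])
    also have "integral\<^sup>L M (\<lambda>x. f2 x * cnj m2) = m2 * cnj m2" by (simp add: m2i)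
    also have "Re (m2 * cnj m2) = (cmod m2)^2" by (subst complex_norm_square[symmetric]) simp
    finally have eR: "integral\<^sup>L M R = (cmod m2)^2" .
    show "integral\<^sup>L M (\<lambda>x. (cmod (f2 x - m2))^2) = Im m2 / Im w2 - (cmod m2)^2"
      unfolding eq using iA iR eA eR by (simp add: prob_space)
    show "integrable M (\<lambda>x. (cmod (f2 x - m2))^2)" unfolding eq using iA iR by auto
  qed
  define P where "P = (m1 - m2) / (w1 - w2)"
  have prod: "(\<lambda>x. f1 x * f2 x) = (\<lambda>x. (f1 x - f2 x) / (w1 - w2))"
  proof
    fix x
    have a: "complex_of_real x - w1 \<noteq> 0"
    proof
      assume "complex_of_real x - w1 = 0"
      then have "Im (complex_of_real x - w1) = 0" by simp
      then show False using iw1 by simp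
    qed
    have b: "complex_of_real x - w2 \<noteq> 0"
    proof
      assume "complex_of_real x - w2 = 0"
      then have "Im (complex_of_real x - w2) = 0" by simp
      then show False using iw2 by simp
    qed
    define u where "u = complex_of_real x - w1"
    define v where "v = complex_of_real x - w2"
    have vu: "v - u = w1 - w2" unfolding u_def v_def by simp
    have "1/u - 1/v = (v - u) / (u * v)" using a b unfolding u_def v_def by (simp add: diff_frac_eq)
    then have "(1/u - 1/v) / (w1 - w2) = 1 / (u * v)" using wne unfolding vu by simp
    then show "f1 x * f2 x = (f1 x - f2 x) / (w1 - w2)" unfolding f1_def f2_def u_def v_def by simp
  qed
  have iP: "integrable M (\<lambda>x. f1 x * f2 x)" unfolding prod using if1 if2 by auto
  have Pv: "integral\<^sup>L M (\<lambda>x. f1 x * f2 x) = P" unfolding prod P_def m1i m2i using if1 if2 by simp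
  have cexp: "(\<lambda>x. (f1 x - m1) * (f2 x - m2)) = (\<lambda>x. f1 x * f2 x - f1 x * m2 - f2 x * m1 + m1 * m2)"
    by (auto simp: algebra_simps)
  have icov: "integrable M (\<lambda>x. (f1 x - m1) * (f2 x - m2))" unfolding cexp using iP if1 if2 by auto
  have Cv: "integral\<^sup>L M (\<lambda>x. (f1 x - m1) * (f2 x - m2)) = P - m1 * m2"
    unfolding cexp using iP if1 if2 Pv m1i m2i by (simp add: prob_space)
  have K6: "cmod (P - m1 * m2) \<le> (l * (Im m1 / Im w1 - (cmod m1)^2) + (Im m2 / Im w2 - (cmod m2)^2) / l) / 2"
    if l: "l > 0" for l
  proof -
    have "cmod (P - m1 * m2) \<le> integral\<^sup>L M (\<lambda>x. cmod ((f1 x - m1) * (f2 x - m2)))"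
      unfolding Cv[symmetric] by (rule integral_norm_bound)
    also have "\<dots> \<le> integral\<^sup>L M (\<lambda>x. (l * (cmod (f1 x - m1))^2 + (cmod (f2 x - m2))^2 / l) / 2)"
    proof (rule integral_mono[OF integrable_norm[OF icov]])
      show "integrable M (\<lambda>x. (l * (cmod (f1 x - m1))^2 + (cmod (f2 x - m2))^2 / l) / 2)"
        using iV1 iV2 by auto
      show "cmod ((f1 x - m1) * (f2 x - m2)) \<le> (l * (cmod (f1 x - m1))^2 + (cmod (f2 x - m2))^2 / l) / 2" for x
        unfolding norm_mult by (rule amgm[OF l])
    qed
    also have "\<dots> = (l * (Im m1 / Im w1 - (cmod m1)^2) + (Im m2 / Im w2 - (cmod m2)^2) / l) / 2"
      using iV1 iV2 V1 V2 by simp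
    finally show ?thesis .
  qed
  have ImF: "Im (-1 / m) = Im m / (cmod m)^2" for m :: complex
    by (simp add: Im_divide cmod_power2)
  have Q1: "(t - 1) * (Im m1 / Im w1 - (cmod m1)^2) = (cmod m1)^2 * (1 - Im z1 / Im w1)"
  proof -
    have "(t - 1) * Im m1 = (cmod m1)^2 * (t * Im w1 - Im z1)"
      using pm1 unfolding F1 ImF using m1nz by (simp add: field_simps)
    then show ?thesis using iw1 by (simp add: field_simps)
  qed
  have Q2: "(t - 1) * (Im m2 / Im w2 - (cmod m2)^2) = (cmod m2)^2 * (1 - Im z2 / Im w2)"
  proof -
    have "(t - 1) * Im m2 = (cmod m2)^2 * (t * Im w2 - Im z2)"
      using pm2 unfolding F2 ImF using m2nz by (simp add: field_simps)
    then show ?thesis using iw2 by (simp add: field_simps)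
  qed
  have lt1: "(t - 1) * (Im m1 / Im w1 - (cmod m1)^2) < (cmod m1)^2"
    unfolding Q1 using m1nz z1 iw1 by (simp add: field_simps)
  have lt2: "(t - 1) * (Im m2 / Im w2 - (cmod m2)^2) < (cmod m2)^2"
    unfolding Q2 using m2nz z2 iw2 by (simp add: field_simps)
  define l where "l = cmod m2 / cmod m1"
  have lpos: "l > 0" unfolding l_def using m1nz m2nz by simp
  have "(t - 1) * cmod (P - m1 * m2) \<le> (t - 1) * ((l * (Im m1 / Im w1 - (cmod m1)^2) + (Im m2 / Im w2 - (cmod m2)^2) / l) / 2)"
    using K6[OF lpos] t by simp
  also have "\<dots> = (l * ((t - 1) * (Im m1 / Im w1 - (cmod m1)^2)) + ((t - 1) * (Im m2 / Im w2 - (cmod m2)^2)) / l) / 2"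
    by (simp add: algebra_simps)
  also have "\<dots> < (l * (cmod m1)^2 + (cmod m2)^2 / l) / 2"
    using lt1 lt2 lpos by (intro divide_strict_right_mono add_strict_mono mult_strict_left_mono) (auto simp: divide_strict_right_mono)
  also have "\<dots> = cmod m1 * cmod m2" unfolding l_def using m1nz m2nz by (simp add: field_simps power2_eq_square)
  finally have main: "(t - 1) * cmod (P - m1 * m2) < cmod m1 * cmod m2" .
  define a where "a = (z1 - z2) / (w1 - w2)"
  have "z1 - z2 = of_real t * (w1 - w2) - of_real (t - 1) * (Ftrans M w1 - Ftrans M w2)"
  proof -
    have zz1: "z1 = of_real t * w1 - of_real (t-1) * Ftrans M w1" using s1 by (simp add: algebra_simps)
    have zz2: "z2 = of_real t * w2 - of_real (t-1) * Ftrans M w2" using s2 by (simp add: algebra_simps)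
    show ?thesis by (subst zz1, subst zz2) (simp add: algebra_simps)
  qed
  also have "Ftrans M w1 - Ftrans M w2 = P * (w1 - w2) / (m1 * m2)"
    unfolding F1 F2 P_def using m1nz m2nz wne by (simp add: field_simps)
  finally have "a = of_real t - of_real (t - 1) * P / (m1 * m2)"
    unfolding a_def using wne by (simp add: field_simps)
  then have "a - 1 = of_real (t - 1) * (m1 * m2 - P) / (m1 * m2)"
    using m1nz m2nz by (simp add: field_simps)
  then have "cmod (a - 1) = cmod (complex_of_real (t - 1)) * cmod (m1 * m2 - P) / cmod (m1 * m2)"
    by (simp only: norm_mult norm_divide)
  also have "cmod (complex_of_real (t - 1)) = t - 1" using t unfolding norm_of_real by simp
  also have "cmod (m1 * m2 - P) = cmod (P - m1 * m2)" by (rule norm_minus_commute)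
  also have "cmod (m1 * m2) = cmod m1 * cmod m2" by (rule norm_mult)
  also have "(t - 1) * cmod (P - m1 * m2) / (cmod m1 * cmod m2) < 1" using main m1nz m2nz by simp
  finally have "Re (1 / a) > 1/2" by (rule recip_half)
  then show ?thesis unfolding a_def by simp
qed

lemma stieltjes_Im_bound:
  fixes \<nu> :: "real measure" and x e b :: real
  assumes P: "prob_space \<nu>" and sN: "sets \<nu> = sets borel" and e: "e > 0"
    and null: "emeasure \<nu> {x - e <..< x + e} = 0" and b: "b > 0"
  shows "Im (stieltjes \<nu> (complex_of_real x + \<i> * complex_of_real b)) \<le> b / e^2"
proof -
  interpret prob_space \<nu> by fact
  define w where "w = complex_of_real x + \<i> * complex_of_real b"
  have iw: "Im w > 0" unfolding w_def using b by simp
  define f where "f = (\<lambda>s::real. 1 / (complex_of_real s - w))"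
  have intf: "integrable \<nu> f" unfolding f_def by (rule intg_f[OF P sN iw])
  have "Im (stieltjes \<nu> w) = integral\<^sup>L \<nu> (\<lambda>s. Im (f s))"
    unfolding stieltjes_def f_def[symmetric] by (rule integral_bounded_linear[OF bounded_linear_Im intf, symmetric])
  also have "\<dots> \<le> integral\<^sup>L \<nu> (\<lambda>s. b / e^2)"
  proof (rule integral_mono_AE)
    show "integrable \<nu> (\<lambda>s. Im (f s))" using intf by auto
    show "integrable \<nu> (\<lambda>s. b / e^2)" by simp
    have nn: "{x - e <..< x + e} \<in> null_sets \<nu>" using null sN by (simp add: null_sets_def)
    have "AE s in \<nu>. s \<notin> {x - e <..< x + e}"
      by (rule AE_I'[OF nn]) auto
    then show "AE s in \<nu>. Im (f s) \<le> b / e^2"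
    proof (rule eventually_mono)
      fix s assume "s \<notin> {x - e <..< x + e}"
      then have "e \<le> \<bar>s - x\<bar>" by auto
      then have "e^2 \<le> (s - x)^2" using e by (metis abs_of_pos power2_abs power_mono less_imp_le)
      then have le: "e^2 \<le> (s - x)^2 + b^2" by (smt (verit) zero_le_power2)
      have "Im (f s) = b / ((s - x)^2 + b^2)"
        unfolding f_def w_def by (simp add: Im_divide power2_eq_square algebra_simps)
      also have "\<dots> \<le> b / e^2"
      proof (rule divide_left_mono)
        show "e^2 \<le> (s - x)^2 + b^2" by (rule le)
        show "0 \<le> b" using b by simp
        show "0 < ((s - x)^2 + b^2) * e^2" using e b by (intro mult_pos_pos add_nonneg_pos) auto
      qed
      finally show "Im (f s) \<le> b / e^2" .
    qed
  qed
  also have "\<dots> = b / e^2" by (simp add: prob_space)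
  finally show ?thesis unfolding w_def .
qed

lemma shift_tendsto:
  fixes \<omega> :: "complex \<Rightarrow> complex"
  assumes cont: "continuous_on (UHP \<union> \<real>) \<omega>" and z: "z \<in> UHP \<union> \<real>"
  shows "((\<lambda>b::real. \<omega> (z + \<i> * of_real b)) \<longlongrightarrow> \<omega> z) (at_right 0)"
proof -
  have Iz: "Im z \<ge> 0" using z by (auto simp: UHP_def complex_is_Real_iff)
  have lim: "(\<omega> \<longlongrightarrow> \<omega> z) (at z within UHP \<union> \<real>)" using cont z by (simp add: continuous_on_def)
  have fl: "filterlim (\<lambda>b::real. z + \<i> * of_real b) (at z within UHP \<union> \<real>) (at_right 0)"
    unfolding filterlim_at
  proof
    have "eventually (\<lambda>b::real. b > 0) (at_right 0)" by (simp add: eventually_at_filter)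
    then show "eventually (\<lambda>b. z + \<i> * of_real b \<in> UHP \<union> \<real> \<and> z + \<i> * of_real b \<noteq> z) (at_right 0)"
      by eventually_elim (use Iz in \<open>auto simp: UHP_def\<close>)
    have "((\<lambda>b. z + \<i> * of_real b) \<longlongrightarrow> z + \<i> * of_real 0) (at_right (0::real))"
      by (intro tendsto_intros)
    then show "((\<lambda>b. z + \<i> * of_real b) \<longlongrightarrow> z) (at_right (0::real))" by simp
  qed
  show ?thesis using filterlim_compose[OF lim fl] .
qed

lemma realpt:
  fixes \<mu> \<nu> :: "real measure" and t x e :: real and \<omega> :: "complex \<Rightarrow> complex"
  assumes t: "t > 1"
    and maps: "\<forall>z\<in>UHP. Im (\<omega> z) \<ge> Im z"
    and subord: "\<forall>z\<in>UHP. of_real t * \<omega> z - z = of_real (t - 1) * Ftrans \<mu> (\<omega> z)"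
    and ext: "continuous_on (UHP \<union> \<real>) \<omega>"
    and nu_prob: "prob_space \<nu>" and nu_sets: "sets \<nu> = sets borel"
    and nu_F: "\<forall>z\<in>UHP. Ftrans \<nu> z = Ftrans \<mu> (\<omega> z)"
    and e: "e > 0" and null: "emeasure \<nu> {x - e <..< x + e} = 0"
  shows "Im (\<omega> (of_real x)) = 0"
proof -
  define G where "G = (\<lambda>z. (of_real t * \<omega> z - z) / of_real (t - 1))"
  define S where "S = UHP \<union> \<real>"
  define K where "K = (\<lambda>b::real. complex_of_real x + \<i> * of_real b) ` {0..1}"
  have KS: "K \<subseteq> S"
  proof
    fix z assume "z \<in> K"
    then obtain b where b: "b \<in> {0..1}" "z = complex_of_real x + \<i> * of_real b" unfolding K_def by auto
    show "z \<in> S"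
    proof (cases "b = 0")
      case True then show ?thesis using b by (simp add: S_def)
    next
      case False then show ?thesis using b by (simp add: S_def UHP_def)
    qed
  qed
  have cG: "continuous_on S G" unfolding G_def S_def
    by (intro continuous_intros ext) (use t in auto)
  have cK: "compact K" unfolding K_def by (intro compact_continuous_image continuous_intros compact_Icc)
  have "compact (G ` K)" by (rule compact_continuous_image[OF continuous_on_subset[OF cG KS] cK])
  then obtain M where M: "\<And>y. y \<in> G ` K \<Longrightarrow> norm y \<le> M" using compact_imp_bounded bounded_iff by metis
  have GF: "G z = Ftrans \<nu> z" if "z \<in> UHP" for z
    using subord that nu_F t unfolding G_def by (simp add: field_simps)
  have bound: "Im (\<omega> (complex_of_real x + \<i> * of_real b)) \<le> b / e^2 * M^2" if b: "0 < b" "b \<le> 1" for b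
  proof -
    define z where "z = complex_of_real x + \<i> * of_real b"
    have zU: "z \<in> UHP" unfolding z_def UHP_def using b by simp
    have zK: "z \<in> K" unfolding z_def K_def using b by auto
    have "(t - 1) * Im (Ftrans \<mu> (\<omega> z)) = t * Im (\<omega> z) - Im z"
      using arg_cong[OF subord[rule_format, OF zU], of Im] by simp
    moreover have "Im z \<le> Im (\<omega> z)" using maps zU by auto
    ultimately have "(t - 1) * Im (\<omega> z) \<le> (t - 1) * Im (Ftrans \<nu> z)" using nu_F zU by (simp add: algebra_simps)
    then have "Im (\<omega> z) \<le> Im (Ftrans \<nu> z)" using t by simp
    also have "Im (Ftrans \<nu> z) = Im (stieltjes \<nu> z) * (cmod (Ftrans \<nu> z))^2"
      unfolding Ftrans_def by (rule Im_F)
    also have "\<dots> \<le> b / e^2 * M^2"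
    proof (rule mult_mono)
      show "Im (stieltjes \<nu> z) \<le> b / e^2" unfolding z_def by (rule stieltjes_Im_bound[OF nu_prob nu_sets e null b(1)])
      have "G z \<in> G ` K" using zK by simp
      then have "cmod (G z) \<le> M" by (rule M)
      then have "cmod (Ftrans \<nu> z) \<le> M" using GF[OF zU] by simp
      then show "(cmod (Ftrans \<nu> z))^2 \<le> M^2" by (intro power_mono) auto
    qed (use b(1) in auto)
    finally show ?thesis unfolding z_def .
  qed
  have lim: "((\<lambda>b::real. Im (\<omega> (complex_of_real x + \<i> * of_real b))) \<longlongrightarrow> Im (\<omega> (of_real x))) (at_right 0)"
    by (intro tendsto_intros shift_tendsto[OF ext]) simp
  have ev: "eventually (\<lambda>b::real. 0 < b \<and> b < 1) (at_right 0)"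
    by (simp add: eventually_at_right_field) (rule exI[of _ 1], auto)
  have lim2: "((\<lambda>b::real. b / e^2 * M^2) \<longlongrightarrow> 0) (at_right 0)"
  proof -
    have "((\<lambda>b::real. b / e^2 * M^2) \<longlongrightarrow> 0 / e^2 * M^2) (at_right 0)" using e by (intro tendsto_intros) auto
    then show ?thesis by simp
  qed
  have up: "Im (\<omega> (of_real x)) \<le> 0"
  proof (rule tendsto_le[OF _ lim2 lim])
    show "eventually (\<lambda>b. Im (\<omega> (complex_of_real x + \<i> * of_real b)) \<le> b / e^2 * M^2) (at_right 0)"
      by (rule eventually_mono[OF ev]) (rule bound, auto)
  qed simp
  have low: "Im (\<omega> (of_real x)) \<ge> 0"
  proof (rule tendsto_lowerbound[OF lim])
    show "eventually (\<lambda>b. 0 \<le> Im (\<omega> (complex_of_real x + \<i> * of_real b))) (at_right 0)"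
    proof (rule eventually_mono[OF ev])
      fix b :: real assume "0 < b \<and> b < 1"
      then have "complex_of_real x + \<i> * of_real b \<in> UHP" by (simp add: UHP_def)
      then have "Im (complex_of_real x + \<i> * of_real b) \<le> Im (\<omega> (complex_of_real x + \<i> * of_real b))"
        using maps by blast
      then show "0 \<le> Im (\<omega> (complex_of_real x + \<i> * of_real b))" using \<open>0 < b \<and> b < 1\<close> by simp
    qed
  qed simp
  show ?thesis using up low by simp
qed

theorem proposition3p4:
  fixes \<mu> \<nu> :: "real measure" and n_ac n_pp n_out :: nat and t :: real
    and \<omega> :: "complex \<Rightarrow> complex"
  assumes A: "assumption_A \<mu> n_ac n_pp n_out"
    and t: "t > 1"
    and hol: "\<omega> holomorphic_on UHP"
    and maps: "\<forall>z\<in>UHP. Im (\<omega> z) \<ge> Im z"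
    and asym: "((\<lambda>\<eta>::real. \<omega> (\<i> * of_real \<eta>) / (\<i> * of_real \<eta>)) \<longlongrightarrow> 1) at_top"
    and subord: "\<forall>z\<in>UHP. of_real t * \<omega> z - z = of_real (t - 1) * Ftrans \<mu> (\<omega> z)"
    and ext: "continuous_on (UHP \<union> \<real>) \<omega>"
    and nu_prob: "prob_space \<nu>" and nu_sets: "sets \<nu> = sets borel"
    and nu_F: "\<forall>z\<in>UHP. Ftrans \<nu> z = Ftrans \<mu> (\<omega> z)"
  shows "strict_mono (\<lambda>x::real. Re (\<omega> (of_real x))) \<and>
         (\<forall>z\<in>UHP. Re (deriv \<omega> z) \<ge> 1 / 2) \<and>
         (\<exists>g. homeomorphism (UHP \<union> \<real>) (\<omega> ` (UHP \<union> \<real>)) \<omega> g) \<and>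
         (\<exists>U g h. open U \<and> (UHP \<union> \<real>) - of_real ` msupp \<nu> \<subseteq> U \<and>
           g holomorphic_on U \<and> (\<forall>z\<in>(UHP \<union> \<real>) - of_real ` msupp \<nu>. g z = \<omega> z) \<and>
           inj_on g U \<and> open (g ` U) \<and> h holomorphic_on (g ` U) \<and> (\<forall>z\<in>U. h (g z) = z))"
proof -
  from A have Pm: "prob_space \<mu>" and sm: "sets \<mu> = sets borel" by (auto simp: assumption_A_def)
  define S where "S = UHP \<union> \<real>"
  have openU: "open UHP" unfolding UHP_def by (rule open_halfspace_Im_gt)
  have ImS: "Im z \<ge> 0" if "z \<in> S" for z using that by (auto simp: S_def UHP_def complex_is_Real_iff)
  have geS: "z \<in> S" if "Im z \<ge> 0" for z
    using that by (cases "Im z = 0") (auto simp: S_def UHP_def complex_is_Real_iff)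
  have shiftU: "z + \<i> * of_real b \<in> UHP" if "z \<in> S" "b > 0" for z b
    using ImS[OF that(1)] that(2) by (simp add: UHP_def)
  have Q: "Re ((\<omega> z1 - \<omega> z2) / (z1 - z2)) > 1/2" if "z1 \<in> UHP" "z2 \<in> UHP" "z1 \<noteq> z2" for z1 z2
  proof (rule core[OF Pm sm t])
    show "Im z1 > 0" "Im z2 > 0" using that by (auto simp: UHP_def)
    show "Im (\<omega> z1) \<ge> Im z1" "Im (\<omega> z2) \<ge> Im z2" using that maps by auto
    show "of_real t * \<omega> z1 - z1 = of_real (t-1) * Ftrans \<mu> (\<omega> z1)" using that subord by auto
    show "of_real t * \<omega> z2 - z2 = of_real (t-1) * Ftrans \<mu> (\<omega> z2)" using that subord by auto
    show "z1 \<noteq> z2" by fact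
  qed
  have Q': "Re ((\<omega> z1 - \<omega> z2) / (z1 - z2)) \<ge> 1/2" if z: "z1 \<in> S" "z2 \<in> S" "z1 \<noteq> z2" for z1 z2
  proof -
    have l: "((\<lambda>b::real. Re ((\<omega> (z1 + \<i> * of_real b) - \<omega> (z2 + \<i> * of_real b)) / (z1 - z2)))
             \<longlongrightarrow> Re ((\<omega> z1 - \<omega> z2) / (z1 - z2))) (at_right 0)"
      using z by (intro tendsto_Re tendsto_divide tendsto_diff tendsto_const shift_tendsto[OF ext])
        (auto simp: S_def)
    have ev: "eventually (\<lambda>b::real. 1/2 \<le> Re ((\<omega> (z1 + \<i> * of_real b) - \<omega> (z2 + \<i> * of_real b)) / (z1 - z2))) (at_right 0)"
    proof -
      have "eventually (\<lambda>b::real. b > 0) (at_right 0)" by (simp add: eventually_at_filter)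
      then show ?thesis
      proof (rule eventually_mono)
        fix b :: real assume b: "b > 0"
        have "Re ((\<omega> (z1 + \<i> * of_real b) - \<omega> (z2 + \<i> * of_real b)) / ((z1 + \<i> * of_real b) - (z2 + \<i> * of_real b))) > 1/2"
          using z by (intro Q shiftU b) auto
        then show "1/2 \<le> Re ((\<omega> (z1 + \<i> * of_real b) - \<omega> (z2 + \<i> * of_real b)) / (z1 - z2))" by simp
      qed
    qed
    show ?thesis by (rule tendsto_lowerbound[OF l ev]) simp
  qed
  have ImW: "Im (\<omega> z) \<ge> Im z" if z: "z \<in> S" for z
  proof -
    have l: "((\<lambda>b::real. Im (\<omega> (z + \<i> * of_real b))) \<longlongrightarrow> Im (\<omega> z)) (at_right 0)"
      using z by (intro tendsto_Im shift_tendsto[OF ext]) (auto simp: S_def)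
    have "eventually (\<lambda>b::real. b > 0) (at_right 0)" by (simp add: eventually_at_filter)
    then have ev: "eventually (\<lambda>b::real. Im z \<le> Im (\<omega> (z + \<i> * of_real b))) (at_right 0)"
    proof (rule eventually_mono)
      fix b :: real assume b: "b > 0"
      have "Im (z + \<i> * of_real b) \<le> Im (\<omega> (z + \<i> * of_real b))" using maps shiftU[OF z b] by blast
      then show "Im z \<le> Im (\<omega> (z + \<i> * of_real b))" using b by simp
    qed
    show ?thesis by (rule tendsto_lowerbound[OF l ev]) simp
  qed
  have lowb: "cmod (z1 - z2) \<le> 2 * cmod (\<omega> z1 - \<omega> z2)" if z: "z1 \<in> S" "z2 \<in> S" for z1 z2
  proof (cases "z1 = z2")
    case True then show ?thesis by simp
  next
    case False
    define q where "q = (\<omega> z1 - \<omega> z2) / (z1 - z2)"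
    have "1/2 \<le> Re q" unfolding q_def using Q'[OF z False] .
    also have "Re q \<le> cmod q" by (rule complex_Re_le_cmod)
    finally have qh: "1/2 \<le> cmod q" .
    have "\<omega> z1 - \<omega> z2 = q * (z1 - z2)" unfolding q_def using False by simp
    then have "cmod (\<omega> z1 - \<omega> z2) = cmod q * cmod (z1 - z2)" by (simp add: norm_mult)
    moreover have "1/2 * cmod (z1 - z2) \<le> cmod q * cmod (z1 - z2)" by (rule mult_right_mono[OF qh norm_ge_zero])
    ultimately show ?thesis by linarith
  qed
  have inj: "inj_on \<omega> S"
    by (rule inj_onI) (use lowb in fastforce)
  have P1: "strict_mono (\<lambda>x::real. Re (\<omega> (of_real x)))"
  proof (rule strict_monoI)
    fix x y :: real assume xy: "x < y"
    have "1/2 \<le> Re ((\<omega> (of_real y) - \<omega> (of_real x)) / (of_real y - of_real x))"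
      using xy by (intro Q') (auto simp: S_def)
    also have "(of_real y - of_real x) = (of_real (y - x) :: complex)" by simp
    finally have "1/2 \<le> Re (\<omega> (of_real y) - \<omega> (of_real x)) / (y - x)" by (simp only: Re_divide_of_real)
    then have "(y - x) / 2 \<le> Re (\<omega> (of_real y) - \<omega> (of_real x))" using xy by (simp add: field_simps)
    then show "Re (\<omega> (of_real x)) < Re (\<omega> (of_real y))" using xy by simp
  qed
  have P2: "\<forall>z\<in>UHP. Re (deriv \<omega> z) \<ge> 1 / 2"
  proof
    fix z assume z: "z \<in> UHP"
    have "\<omega> field_differentiable at z" by (rule holomorphic_on_imp_differentiable_at[OF hol openU z])
    then have "(\<omega> has_field_derivative deriv \<omega> z) (at z)" by (simp add: DERIV_deriv_iff_field_differentiable)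
    then have "((\<lambda>y. (\<omega> y - \<omega> z) / (y - z)) \<longlongrightarrow> deriv \<omega> z) (at z)" by (simp add: has_field_derivative_iff)
    then have l: "((\<lambda>y. Re ((\<omega> y - \<omega> z) / (y - z))) \<longlongrightarrow> Re (deriv \<omega> z)) (at z)" by (rule tendsto_Re)
    have ev: "eventually (\<lambda>y. 1/2 \<le> Re ((\<omega> y - \<omega> z) / (y - z))) (at z)"
      using eventually_at_in_open[OF openU z]
    proof (rule eventually_mono)
      fix y assume "y \<in> UHP - {z}"
      then show "1/2 \<le> Re ((\<omega> y - \<omega> z) / (y - z))" using Q[of y z] z by auto
    qed
    show "Re (deriv \<omega> z) \<ge> 1 / 2" by (rule tendsto_lowerbound[OF l ev]) simp
  qed
  have P3: "homeomorphism S (\<omega> ` S) \<omega> (inv_into S \<omega>)"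
    unfolding homeomorphism_def
  proof (intro conjI ballI)
    show "inv_into S \<omega> (\<omega> x) = x" if "x \<in> S" for x using inv_into_f_f[OF inj that] .
    show "\<omega> ` S = \<omega> ` S" ..
    show "continuous_on S \<omega>" using ext unfolding S_def .
    show "inv_into S \<omega> ` \<omega> ` S = S" using inv_into_image_cancel[OF inj order.refl] .
    show "\<omega> (inv_into S \<omega> y) = y" if "y \<in> \<omega> ` S" for y using f_inv_into_f[OF that] .
    show "continuous_on (\<omega> ` S) (inv_into S \<omega>)"
      unfolding continuous_on_iff
    proof (intro ballI allI impI)
      fix y e assume y: "y \<in> \<omega> ` S" and e: "(0::real) < e"
      show "\<exists>d>0. \<forall>y'\<in>\<omega> ` S. dist y' y < d \<longrightarrow> dist (inv_into S \<omega> y') (inv_into S \<omega> y) < e"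
      proof (intro exI[of _ "e/2"] conjI ballI impI)
        show "e/2 > 0" using e by simp
        fix y' assume y': "y' \<in> \<omega> ` S" and d: "dist y' y < e/2"
        obtain a where a: "a \<in> S" "y = \<omega> a" using y by auto
        obtain a' where a': "a' \<in> S" "y' = \<omega> a'" using y' by auto
        have "dist a' a \<le> 2 * dist (\<omega> a') (\<omega> a)" using lowb[OF a'(1) a(1)] by (simp add: dist_norm)
        also have "\<dots> < e" using d a a' by simp
        finally show "dist (inv_into S \<omega> y') (inv_into S \<omega> y) < e"
          using inv_into_f_f[OF inj a(1)] inv_into_f_f[OF inj a'(1)] a a' by simp
      qed
    qed
  qed
  define BB where "BB = {ball (complex_of_real x) e | x e. e > 0 \<and> emeasure \<nu> {x - e <..< x + e} = 0}"
  define U where "U = UHP \<union> \<Union>BB"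
  define g where "g = (\<lambda>z. if 0 \<le> Im z then \<omega> z else cnj (\<omega> (cnj z)))"
  have openUU: "open U" unfolding U_def BB_def by (intro open_Un openU open_Union) auto
  have holB: "g holomorphic_on B" if B: "B \<in> BB" for B
  proof -
    obtain x e where xe: "B = ball (complex_of_real x) e" "e > 0" "emeasure \<nu> {x - e <..< x + e} = 0"
      using B unfolding BB_def by auto
    show ?thesis unfolding g_def xe(1)
    proof (rule Schwarz_reflection)
      show "open (ball (complex_of_real x) e)" by simp
      show "cnj ` ball (complex_of_real x) e \<subseteq> ball (complex_of_real x) e"
      proof
        fix w assume "w \<in> cnj ` ball (complex_of_real x) e"
        then obtain v where v: "v \<in> ball (complex_of_real x) e" "w = cnj v" by auto
        have "dist (complex_of_real x) (cnj v) = cmod (cnj (complex_of_real x - v))" by (simp add: dist_norm)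
        also have "\<dots> = dist (complex_of_real x) v" by (simp only: complex_mod_cnj dist_norm)
        finally show "w \<in> ball (complex_of_real x) e" using v by simp
      qed
      show "\<omega> holomorphic_on (ball (complex_of_real x) e \<inter> {z. 0 < Im z})"
        by (rule holomorphic_on_subset[OF hol]) (auto simp: UHP_def)
      show "continuous_on (ball (complex_of_real x) e \<inter> {z. 0 \<le> Im z}) \<omega>"
        by (rule continuous_on_subset[OF ext]) (use geS in \<open>auto simp: S_def\<close>)
      fix z assume z: "z \<in> ball (complex_of_real x) e" "z \<in> \<real>"
      define r where "r = Re z"
      have zr: "z = complex_of_real r" unfolding r_def using z(2) by (simp add: complex_is_Real_iff complex_eq_iff)
      have d: "\<bar>r - x\<bar> < e" using z(1) unfolding zr by (simp add: dist_real_def dist_commute)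
      define e' where "e' = e - \<bar>r - x\<bar>"
      have e': "e' > 0" unfolding e'_def using d by simp
      have sub: "{r - e' <..< r + e'} \<subseteq> {x - e <..< x + e}" unfolding e'_def by auto
      have "emeasure \<nu> {r - e' <..< r + e'} \<le> emeasure \<nu> {x - e <..< x + e}"
        by (rule emeasure_mono[OF sub]) (simp add: nu_sets)
      then have null: "emeasure \<nu> {r - e' <..< r + e'} = 0" using xe(3) by simp
      have "Im (\<omega> (of_real r)) = 0"
        by (rule realpt[OF t maps subord ext nu_prob nu_sets nu_F e' null])
      then show "\<omega> z \<in> \<real>" unfolding zr by (simp add: complex_is_Real_iff)
    qed
  qed
  have holUHP: "g holomorphic_on UHP"
    by (rule holomorphic_transform[OF hol]) (auto simp: g_def UHP_def)
  have holg: "g holomorphic_on U"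
    unfolding holomorphic_on_def
  proof
    fix z assume z: "z \<in> U"
    have "g field_differentiable at z"
    proof (cases "z \<in> UHP")
      case True then show ?thesis by (rule holomorphic_on_imp_differentiable_at[OF holUHP openU])
    next
      case False
      then obtain B where B: "B \<in> BB" "z \<in> B" using z unfolding U_def by auto
      have "open B" using B(1) unfolding BB_def by auto
      then show ?thesis by (rule holomorphic_on_imp_differentiable_at[OF holB[OF B(1)] _ B(2)])
    qed
    then show "g field_differentiable at z within U" by (rule field_differentiable_at_within)
  qed
  have injg: "inj_on g U"
  proof (rule inj_onI)
    fix z1 z2 assume z1: "z1 \<in> U" and z2: "z2 \<in> U" and eq: "g z1 = g z2"
    have up: "Im (g z) \<ge> 0" if "Im z \<ge> 0" for z
      using ImW[OF geS[OF that]] that by (simp add: g_def)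
    have down: "Im (g z) < 0" if "Im z < 0" for z
    proof -
      have "cnj z \<in> UHP" using that by (simp add: UHP_def)
      then have "Im (cnj z) \<le> Im (\<omega> (cnj z))" using maps by blast
      then show ?thesis using that by (simp add: g_def)
    qed
    show "z1 = z2"
    proof (cases "0 \<le> Im z1")
      case c1: True
      show ?thesis
      proof (cases "0 \<le> Im z2")
        case True
        then have "\<omega> z1 = \<omega> z2" using eq c1 by (simp add: g_def)
        then show ?thesis using inj geS[OF c1] geS[OF True] by (auto dest: inj_onD)
      next
        case False then show ?thesis using up[OF c1] down[of z2] eq by simp
      qed
    next
      case c1: False
      show ?thesis
      proof (cases "0 \<le> Im z2")
        case True then show ?thesis using up[OF True] down[of z1] eq c1 by simp
      next
        case False
        then have "\<omega> (cnj z1) = \<omega> (cnj z2)" using eq c1 by (simp add: g_def)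
        moreover have "cnj z1 \<in> S" "cnj z2 \<in> S" using c1 False by (auto intro: geS)
        ultimately have "cnj z1 = cnj z2" using inj by (auto dest: inj_onD)
        then show ?thesis by simp
      qed
    qed
  qed
  have sub: "S - of_real ` msupp \<nu> \<subseteq> U"
  proof
    fix z assume z: "z \<in> S - of_real ` msupp \<nu>"
    show "z \<in> U"
    proof (cases "z \<in> UHP")
      case True then show ?thesis by (simp add: U_def)
    next
      case False
      then have zR: "z \<in> \<real>" using z by (auto simp: S_def)
      define r where "r = Re z"
      have zr: "z = complex_of_real r" unfolding r_def using zR by (simp add: complex_is_Real_iff complex_eq_iff)
      have "r \<notin> msupp \<nu>" using z zr by auto
      then obtain e where e: "e > 0" "\<not> emeasure \<nu> {r - e <..< r + e} > 0" unfolding msupp_def by auto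
      then have "emeasure \<nu> {r - e <..< r + e} = 0" by (simp add: not_gr_zero)
      then have "ball (complex_of_real r) e \<in> BB" unfolding BB_def using e by auto
      moreover have "z \<in> ball (complex_of_real r) e" using zr e by simp
      ultimately have "z \<in> \<Union>BB" by (rule UnionI)
      then show ?thesis unfolding U_def by simp
    qed
  qed
  have geq: "\<forall>z\<in>S - of_real ` msupp \<nu>. g z = \<omega> z" using ImS by (auto simp: g_def)
  have opg: "open (g ` U)" by (rule open_mapping_thm3[OF holg openUU injg])
  obtain h where h: "h holomorphic_on (g ` U)" "\<And>z. z \<in> U \<Longrightarrow> h (g z) = z"
    using holomorphic_has_inverse[OF holg openUU injg] by metis
  have P4: "\<exists>U g h. open U \<and> (UHP \<union> \<real>) - of_real ` msupp \<nu> \<subseteq> U \<and>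
           g holomorphic_on U \<and> (\<forall>z\<in>(UHP \<union> \<real>) - of_real ` msupp \<nu>. g z = \<omega> z) \<and>
           inj_on g U \<and> open (g ` U) \<and> h holomorphic_on (g ` U) \<and> (\<forall>z\<in>U. h (g z) = z)"
    using openUU sub holg geq injg opg h unfolding S_def by blast
  show ?thesis using P1 P2 P3 P4 unfolding S_def by blast
qed

end
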